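(* Let $m\ge 2$ be fixed and assume (A1)–(A4). Let $X_{\mathbf 1}$ be the number of coupons collected by all $m$ collectors. Then: (i) if $a_1/n\to0$ and $a_2/n\to0$, then $\mathbb{E}(X_{\mathbf 1})\sim\operatorname{Var}(X_{\mathbf 1})$; (ii) if $a_1/n\to0$ and $a_2/n\to1$, then $\mathbb{E}(a_1-X_{\mathbf 1})\sim\operatorname{Var}(X_{\mathbf 1})$; (iii) if $a_1/n\to1$ and $a_2/n\to1$, then $\mathbb{E}\big(X_{\mathbf 1}+(m-1)n-\sum_{i=1}^m a_i\big)\sim\operatorname{Var}(X_{\mathbf 1})$. No assumption on convergence of $\operatorname{Var}(X_{\mathbf 1})$ is needed.
   Context: Coupon collector model: there are $n$ distinct coupons and $m$ collectors acting independently; collector $i$ collects a uniformly random subset of exactly $a_i$ distinct coupons, independently of the others. We consider a sequence of such models indexed by $n$, with $m$ fixed and $a_i=a_i(n)$, under the asymptotic assumptions: (A1) $n\to\infty$; (A2) $a_i\to\infty$ and $n-a_i\to\infty$ for each $i$; (A3) $1\le a_1\le a_2\le\cdots\le a_m\le n-1$; (A4) $a_i/n\to\alpha_i\in[0,1]$ for each $i$. $x_n\sim y_n$ means $x_n/y_n\to1$. *)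

theory Defs
  imports "HOL-Probability.Probability" "HOL-Library.Landau_Symbols"
begin

text \<open>The outcome is the
  tuple of collected sets (outside {1..m} the value is the empty set).\<close>

definition coupon_pmf :: "nat \<Rightarrow> nat \<Rightarrow> (nat \<Rightarrow> nat) \<Rightarrow> (nat \<Rightarrow> nat set) pmf" where
  "coupon_pmf n m a =
     Pi_pmf {1..m} {} (\<lambda>i. pmf_of_set {S. S \<subseteq> {..<n} \<and> card S = a i})"

definition X_all :: "nat \<Rightarrow> (nat \<Rightarrow> nat set) \<Rightarrow> nat" where
  "X_all m S = card (\<Inter>i\<in>{1..m}. S i)"

definition E_cc :: "nat \<Rightarrow> nat \<Rightarrow> (nat \<Rightarrow> nat) \<Rightarrow> ((nat \<Rightarrow> nat set) \<Rightarrow> real) \<Rightarrow> real" where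
  "E_cc n m a Y = measure_pmf.expectation (coupon_pmf n m a) Y"

definition Var_X :: "nat \<Rightarrow> nat \<Rightarrow> (nat \<Rightarrow> nat) \<Rightarrow> real" where
  "Var_X n m a = measure_pmf.variance (coupon_pmf n m a) (\<lambda>S. real (X_all m S))"

end

theory Submission
  imports Defs
begin

lemma card_subsets_sup:
  assumes U: "finite U" and B: "B \<subseteq> U" and k: "card B \<le> k"
  shows "card {S. S \<subseteq> U \<and> card S = k \<and> B \<subseteq> S} = (card U - card B) choose (k - card B)"
proof -
  have fB: "finite B" using U B finite_subset by blast
  have "bij_betw (\<lambda>S. S - B) {S. S \<subseteq> U \<and> card S = k \<and> B \<subseteq> S} {T. T \<subseteq> U - B \<and> card T = k - card B}"
  proof (rule bij_betwI[where g = "\<lambda>T. T \<union> B"])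
    show "(\<lambda>S. S - B) \<in> {S. S \<subseteq> U \<and> card S = k \<and> B \<subseteq> S} \<rightarrow> {T. T \<subseteq> U - B \<and> card T = k - card B}"
      using fB by (auto simp: card_Diff_subset)
    show "(\<lambda>T. T \<union> B) \<in> {T. T \<subseteq> U - B \<and> card T = k - card B} \<rightarrow> {S. S \<subseteq> U \<and> card S = k \<and> B \<subseteq> S}"
    proof
      fix T assume T: "T \<in> {T. T \<subseteq> U - B \<and> card T = k - card B}"
      have fT: "finite T" using T U finite_subset by blast
      have "card (T \<union> B) = card T + card B" using T fT fB by (subst card_Un_disjoint) auto
      then show "T \<union> B \<in> {S. S \<subseteq> U \<and> card S = k \<and> B \<subseteq> S}" using T B k by auto
    qed
  qed auto
  then have "card {S. S \<subseteq> U \<and> card S = k \<and> B \<subseteq> S} = card {T. T \<subseteq> U - B \<and> card T = k - card B}"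
    by (rule bij_betw_same_card)
  also have "\<dots> = card (U - B) choose (k - card B)" using U by (simp add: n_subsets)
  also have "card (U - B) = card U - card B" using B fB by (simp add: card_Diff_subset)
  finally show ?thesis .
qed

definition Dk :: "nat \<Rightarrow> nat \<Rightarrow> nat set pmf" where
  "Dk n k = pmf_of_set {S. S \<subseteq> {..<n} \<and> card S = k}"

lemma Dk_set: "k \<le> n \<Longrightarrow> set_pmf (Dk n k) = {S. S \<subseteq> {..<n} \<and> card S = k}"
  unfolding Dk_def
proof (rule set_pmf_of_set)
  assume "k \<le> n"
  then show "{S. S \<subseteq> {..<n} \<and> card S = k} \<noteq> {}"
    by (auto intro!: exI[of _ "{..<k}"])
qed (auto intro!: finite_subset[of _ "Pow {..<n}"])

lemma Dk_exp:
  assumes "k \<le> n" "B \<subseteq> {..<n}" "card B \<le> k"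
  shows "measure_pmf.expectation (Dk n k) (\<lambda>S. of_bool (B \<subseteq> S) :: real)
          = real ((n - card B) choose (k - card B)) / real (n choose k)"
proof -
  let ?A = "{S. S \<subseteq> {..<n} \<and> card S = k}"
  have fin: "finite ?A" by (rule finite_subset[of _ "Pow {..<n}"]) auto
  have cA: "card ?A = n choose k" by (simp add: n_subsets[of "{..<n}", simplified])
  have ne: "?A \<noteq> {}" using cA assms(1) by (metis card.empty zero_less_binomial_iff not_less0 )
  have "(\<Sum>S\<in>?A. of_bool (B \<subseteq> S) :: real) = real (card {S\<in>?A. B \<subseteq> S})"
    using fin by (simp add: sum.If_cases Int_def)
  also have "{S\<in>?A. B \<subseteq> S} = {S. S \<subseteq> {..<n} \<and> card S = k \<and> B \<subseteq> S}" by auto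
  also have "card \<dots> = (n - card B) choose (k - card B)"
    using card_subsets_sup[of "{..<n}" B k] assms by simp
  finally show ?thesis unfolding Dk_def using fin ne cA by (simp add: integral_pmf_of_set)
qed


lemma coupon_pmf_Dk: "coupon_pmf n m a = Pi_pmf {1..m} {} (\<lambda>i. Dk n (a i))"
  unfolding coupon_pmf_def Dk_def ..

lemma coupon_set:
  assumes "\<forall>i\<in>{1..m}. a i \<le> n" "y \<in> set_pmf (coupon_pmf n m a)" "i \<in> {1..m}"
  shows "y i \<subseteq> {..<n} \<and> card (y i) = a i"
  using assms unfolding coupon_pmf_Dk by (auto simp: set_Pi_pmf PiE_dflt_def Dk_set)

lemma coupon_integrable:
  assumes "\<forall>i\<in>{1..m}. a i \<le> n"
  shows "integrable (measure_pmf (coupon_pmf n m a)) (f :: _ \<Rightarrow> real)"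
proof (rule integrable_measure_pmf_finite)
  have "set_pmf (coupon_pmf n m a) = PiE_dflt {1..m} {} (\<lambda>i. {S. S \<subseteq> {..<n} \<and> card S = a i})"
    unfolding coupon_pmf_Dk using assms by (subst set_Pi_pmf) (auto simp: Dk_set o_def PiE_dflt_def)
  moreover have "finite \<dots>"
    by (intro finite_PiE_dflt) (auto intro!: finite_subset[of _ "Pow {..<n}"])
  ultimately show "finite (set_pmf (coupon_pmf n m a))" by simp
qed

lemma coupon_E_prod:
  assumes "\<forall>i\<in>{1..m}. a i \<le> n" "B \<subseteq> {..<n}" "\<forall>i\<in>{1..m}. card B \<le> a i"
  shows "measure_pmf.expectation (coupon_pmf n m a) (\<lambda>y. \<Prod>i\<in>{1..m}. of_bool (B \<subseteq> y i) :: real)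
     = (\<Prod>i\<in>{1..m}. real ((n - card B) choose (a i - card B)) / real (n choose a i))"
  unfolding coupon_pmf_Dk
  apply (subst expectation_prod_Pi_pmf)
  using assms by (auto intro!: prod.cong Dk_exp integrable_measure_pmf_finite simp: Dk_set
     intro: finite_subset[of _ "Pow {..<n}"])


lemma prod_of_bool_real: "finite A \<Longrightarrow> (\<Prod>i\<in>A. of_bool (P i) :: real) = of_bool (\<forall>i\<in>A. P i)"
  by (induction A rule: finite_induct) auto

lemma X_repr:
  assumes m: "m \<ge> 1" and sub: "\<forall>i\<in>{1..m}. y i \<subseteq> {..<n}"
  shows "real (X_all m y) = (\<Sum>j<n. \<Prod>i\<in>{1..m}. of_bool ({j} \<subseteq> y i))"
proof -
  have I: "(\<Inter>i\<in>{1..m}. y i) \<subseteq> {..<n}" using m sub by (metis INT_lower atLeastAtMost_iff le_refl order_trans)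
  have "real (X_all m y) = (\<Sum>j<n. of_bool (j \<in> (\<Inter>i\<in>{1..m}. y i)))"
    unfolding X_all_def using I by (simp add: sum.If_cases, intro arg_cong[where f=card]) auto
  also have "\<dots> = (\<Sum>j<n. \<Prod>i\<in>{1..m}. of_bool ({j} \<subseteq> y i))"
    by (intro sum.cong refl) (simp add: prod_of_bool_real)
  finally show ?thesis .
qed

lemma X2_repr:
  assumes m: "m \<ge> 1" and sub: "\<forall>i\<in>{1..m}. y i \<subseteq> {..<n}"
  shows "(real (X_all m y))\<^sup>2 = (\<Sum>j<n. \<Sum>l<n. \<Prod>i\<in>{1..m}. of_bool ({j,l} \<subseteq> y i))"
proof -
  have "(real (X_all m y))\<^sup>2 = (\<Sum>j<n. \<Prod>i\<in>{1..m}. of_bool ({j} \<subseteq> y i)) * (\<Sum>l<n. \<Prod>i\<in>{1..m}. of_bool ({l} \<subseteq> y i))"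
    using X_repr[OF assms] by (simp add: power2_eq_square)
  also have "\<dots> = (\<Sum>j<n. \<Sum>l<n. (\<Prod>i\<in>{1..m}. of_bool ({j} \<subseteq> y i)) * (\<Prod>i\<in>{1..m}. of_bool ({l} \<subseteq> y i)))"
    by (simp add: sum_product)
  also have "\<dots> = (\<Sum>j<n. \<Sum>l<n. \<Prod>i\<in>{1..m}. of_bool ({j,l} \<subseteq> y i))"
    apply (intro sum.cong refl) apply (simp add: prod_of_bool_real flip: prod.distrib) by blast
  finally show ?thesis .
qed

lemma binom_ratio1:
  assumes "1 \<le> k" "k \<le> n"
  shows "real ((n - 1) choose (k - 1)) / real (n choose k) = real k / real n"
proof -
  have "k * (n choose k) = n * (n - 1 choose (k - 1))" using assms by (simp add: times_binomial_minus1_eq)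
  hence "real k * real (n choose k) = real n * real (n - 1 choose (k - 1))" by (metis of_nat_mult)
  moreover have "(n choose k) > 0" using assms by simp
  moreover have "n > 0" using assms by simp
  ultimately show ?thesis by (simp add: field_simps)
qed

lemma binom_ratio2:
  assumes "2 \<le> k" "k \<le> n"
  shows "real ((n - 2) choose (k - 2)) / real (n choose k) = real k * (real k - 1) / (real n * (real n - 1))"
proof -
  have e1: "real ((n - 1) choose (k - 1)) / real (n choose k) = real k / real n" using assms binom_ratio1 by simp
  have e2: "real ((n - 1 - 1) choose (k - 1 - 1)) / real ((n - 1) choose (k - 1)) = real (k - 1) / real (n - 1)"
    using assms binom_ratio1[of "k - 1" "n - 1"] by simp
  have nn: "n - 1 - 1 = n - 2" "k - 1 - 1 = k - 2" by simp_all
  have p: "real ((n - 1) choose (k - 1)) > 0" using assms by simp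
  have "real ((n - 2) choose (k - 2)) / real (n choose k) =
     (real ((n - 1 - 1) choose (k - 1 - 1)) / real ((n - 1) choose (k - 1))) * (real ((n - 1) choose (k - 1)) / real (n choose k))"
    using p by (simp add: nn numeral_2_eq_2)
  also have "\<dots> = real (k - 1) / real (n - 1) * (real k / real n)" by (simp only: e1 e2)
  also have "\<dots> = real k * (real k - 1) / (real n * (real n - 1))" using assms by (simp add: of_nat_diff mult.commute)
  finally show ?thesis .
qed


lemma sum_diag: "(\<Sum>j<n. \<Sum>l<n. if j = l then A else C) = real n * A + (real n * real n - real n) * (C::real)"
proof -
  have "(\<Sum>l<n. if j = l then A else C) = A + (real n - 1) * C" if "j < n" for j
  proof -
    have "(\<Sum>l<n. if j = l then A else C) = (if j = j then A else C) + (\<Sum>l\<in>{..<n}-{j}. if j = l then A else C)"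
      using that by (intro sum.remove) auto
    also have "(\<Sum>l\<in>{..<n}-{j}. if j = l then A else C) = (\<Sum>l\<in>{..<n}-{j}. C)" by (intro sum.cong) auto
    finally show ?thesis using that by (simp add: of_nat_diff)
  qed
  hence "(\<Sum>j<n. \<Sum>l<n. if j = l then A else C) = (\<Sum>j<n. A + (real n - 1) * C)" by simp
  also have "\<dots> = real n * A + (real n * real n - real n) * C" by (simp add: algebra_simps)
  finally show ?thesis .
qed

lemma coupon_moments:
  assumes m: "m \<ge> 1" and a: "\<forall>i\<in>{1..m}. 2 \<le> a i \<and> a i \<le> n"
  shows "measure_pmf.expectation (coupon_pmf n m a) (\<lambda>y. real (X_all m y)) = real n * (\<Prod>i\<in>{1..m}. real (a i) / real n)"
    and "measure_pmf.expectation (coupon_pmf n m a) (\<lambda>y. (real (X_all m y))\<^sup>2) =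
          real n * (\<Prod>i\<in>{1..m}. real (a i) / real n) +
          (real n * real n - real n) * (\<Prod>i\<in>{1..m}. real (a i) * (real (a i) - 1) / (real n * (real n - 1)))"
proof -
  let ?M = "coupon_pmf n m a"
  have a': "\<forall>i\<in>{1..m}. a i \<le> n" using a by auto
  have sub: "\<forall>i\<in>{1..m}. y i \<subseteq> {..<n}" if "y \<in> set_pmf ?M" for y
    using coupon_set[OF a' that] by auto
  have "measure_pmf.expectation ?M (\<lambda>y. real (X_all m y)) =
        measure_pmf.expectation ?M (\<lambda>y. \<Sum>j<n. \<Prod>i\<in>{1..m}. of_bool ({j} \<subseteq> y i))"
    by (intro integral_cong_AE AE_pmfI) (auto simp: X_repr[OF m sub])
  also have "\<dots> = (\<Sum>j<n. measure_pmf.expectation ?M (\<lambda>y. \<Prod>i\<in>{1..m}. of_bool ({j} \<subseteq> y i)))"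
    by (rule Bochner_Integration.integral_sum) (rule coupon_integrable[OF a'])
  also have "\<dots> = (\<Sum>j<n. \<Prod>i\<in>{1..m}. real (a i) / real n)"
  proof (intro sum.cong refl)
    fix j assume "j \<in> {..<n}"
    then show "measure_pmf.expectation ?M (\<lambda>y. \<Prod>i\<in>{1..m}. of_bool ({j} \<subseteq> y i)) = (\<Prod>i\<in>{1..m}. real (a i) / real n)"
      using a by (subst coupon_E_prod) (auto intro!: prod.cong binom_ratio1[unfolded One_nat_def])
  qed
  finally show "measure_pmf.expectation ?M (\<lambda>y. real (X_all m y)) = real n * (\<Prod>i\<in>{1..m}. real (a i) / real n)"
    by simp
  have "measure_pmf.expectation ?M (\<lambda>y. (real (X_all m y))\<^sup>2) =
        measure_pmf.expectation ?M (\<lambda>y. \<Sum>j<n. \<Sum>l<n. \<Prod>i\<in>{1..m}. of_bool ({j,l} \<subseteq> y i))"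
    by (intro integral_cong_AE AE_pmfI) (auto simp: X2_repr[OF m sub])
  also have "\<dots> = (\<Sum>j<n. \<Sum>l<n. measure_pmf.expectation ?M (\<lambda>y. \<Prod>i\<in>{1..m}. of_bool ({j,l} \<subseteq> y i)))"
    by (simp add: Bochner_Integration.integral_sum coupon_integrable a')
  also have "\<dots> = (\<Sum>j<n. \<Sum>l<n. if j = l then (\<Prod>i\<in>{1..m}. real (a i) / real n)
                   else (\<Prod>i\<in>{1..m}. real (a i) * (real (a i) - 1) / (real n * (real n - 1))))"
  proof (intro sum.cong refl)
    fix j l assume jl: "j \<in> {..<n}" "l \<in> {..<n}"
    show "measure_pmf.expectation ?M (\<lambda>y. \<Prod>i\<in>{1..m}. of_bool ({j,l} \<subseteq> y i)) = (if j = l then (\<Prod>i\<in>{1..m}. real (a i) / real n)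
                   else (\<Prod>i\<in>{1..m}. real (a i) * (real (a i) - 1) / (real n * (real n - 1))))"
    proof (cases "j = l")
      case True
      then show ?thesis using a jl by (subst coupon_E_prod) (auto intro!: prod.cong binom_ratio1[unfolded One_nat_def])
    next
      case False
      then show ?thesis using a jl by (subst coupon_E_prod) (auto intro!: prod.cong binom_ratio2[unfolded numeral_2_eq_2])
    qed
  qed
  also have "\<dots> = real n * (\<Prod>i\<in>{1..m}. real (a i) / real n) +
          (real n * real n - real n) * (\<Prod>i\<in>{1..m}. real (a i) * (real (a i) - 1) / (real n * (real n - 1)))"
    by (rule sum_diag)
  finally show "measure_pmf.expectation ?M (\<lambda>y. (real (X_all m y))\<^sup>2) =
          real n * (\<Prod>i\<in>{1..m}. real (a i) / real n) +
          (real n * real n - real n) * (\<Prod>i\<in>{1..m}. real (a i) * (real (a i) - 1) / (real n * (real n - 1)))" .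
qed

lemma prod_diff_le:
  assumes "finite A" "\<forall>i\<in>A. 0 \<le> y i \<and> y i \<le> x i \<and> x i \<le> (1::real)"
  shows "(\<Prod>i\<in>A. x i) - (\<Prod>i\<in>A. y i) \<le> (\<Sum>i\<in>A. x i - y i)
       \<and> (\<Sum>i\<in>A. x i - y i) * (\<Prod>i\<in>A. y i) \<le> (\<Prod>i\<in>A. x i) - (\<Prod>i\<in>A. y i)
       \<and> 0 \<le> (\<Prod>i\<in>A. y i) \<and> (\<Prod>i\<in>A. y i) \<le> (\<Prod>i\<in>A. x i) \<and> (\<Prod>i\<in>A. x i) \<le> 1"
  using assms
proof (induction A rule: finite_induct)
  case empty
  then show ?case by simp
next
  case (insert a F)
  define X where "X = (\<Prod>i\<in>F. x i)"
  define Y where "Y = (\<Prod>i\<in>F. y i)"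
  define S where "S = (\<Sum>i\<in>F. x i - y i)"
  have IH: "X - Y \<le> S \<and> S * Y \<le> X - Y \<and> 0 \<le> Y \<and> Y \<le> X \<and> X \<le> 1"
    using insert unfolding X_def Y_def S_def by auto
  have a: "0 \<le> y a" "y a \<le> x a" "x a \<le> 1" using insert by auto
  have S0: "0 \<le> S" unfolding S_def using insert by (auto intro!: sum_nonneg)
  have e: "(\<Prod>i\<in>insert a F. x i) = x a * X" "(\<Prod>i\<in>insert a F. y i) = y a * Y"
     "(\<Sum>i\<in>insert a F. x i - y i) = (x a - y a) + S"
    using insert unfolding X_def Y_def S_def by auto
  have 1: "x a * X - y a * Y \<le> (x a - y a) + S"
  proof -
    have "x a * X - y a * Y = x a * (X - Y) + (x a - y a) * Y" by (simp add: algebra_simps)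
    also have "\<dots> \<le> 1 * S + (x a - y a) * 1"
      using IH a by (intro add_mono mult_mono) auto
    finally show ?thesis by simp
  qed
  have 2: "((x a - y a) + S) * (y a * Y) \<le> x a * X - y a * Y"
  proof -
    have "((x a - y a) + S) * (y a * Y) = (x a - y a) * y a * Y + y a * (S * Y)" by (simp add: algebra_simps)
    also have "\<dots> \<le> (x a - y a) * 1 * Y + x a * (X - Y)"
      using IH a S0 by (intro add_mono mult_mono) auto
    also have "\<dots> = x a * X - y a * Y" by (simp add: algebra_simps)
    finally show ?thesis .
  qed
  have 3: "0 \<le> y a * Y" "y a * Y \<le> x a * X" "x a * X \<le> 1"
    using IH a by (auto intro: mult_mono mult_le_one)
  show ?case unfolding e using 1 2 3 by auto
qed


lemma key_iii:
  fixes u :: "nat \<Rightarrow> real" and N c \<eta> :: real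
  assumes "finite A" and N: "N > 1" and c: "c = N / (N - 1)" and \<eta>: "\<eta> \<ge> 0"
  shows "(\<forall>i\<in>A. 0 \<le> u i \<and> c * u i \<le> 1) \<Longrightarrow>
    c * (\<Sum>i\<in>A. u i) + 1 / (N - 1) \<le> \<eta> * (\<Prod>i\<in>A. 1 - u i) \<Longrightarrow>
    \<bar>((N - 1) * (\<Prod>i\<in>A. 1 - c * u i) - N * (\<Prod>i\<in>A. 1 - u i) + 1) - ((\<Prod>i\<in>A. 1 - u i) - 1 + (\<Sum>i\<in>A. u i))\<bar>
      \<le> \<eta> * ((\<Prod>i\<in>A. 1 - u i) - 1 + (\<Sum>i\<in>A. u i))
    \<and> 0 \<le> (\<Prod>i\<in>A. 1 - u i) - 1 + (\<Sum>i\<in>A. u i)"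
  using assms(1)
proof (induction A rule: finite_induct)
  case empty
  then show ?case by simp
next
  case (insert a F)
  have c1: "c \<ge> 1" using N c by (simp add: le_divide_eq)
  have Nc: "N * (c - 1) = c" "(N - 1) * c = N" "c - 1 = 1 / (N - 1)" using N c by (simp_all add: field_simps)
  define P where "P = (\<Prod>i\<in>F. 1 - u i)"
  define R where "R = (\<Prod>i\<in>F. 1 - c * u i)"
  define s where "s = (\<Sum>i\<in>F. u i)"
  define e where "e = P - 1 + s"
  define B where "B = (N - 1) * R - N * P + 1"
  have ua: "0 \<le> u a" "c * u a \<le> 1" using insert by auto
  have ua1: "u a \<le> 1"
  proof -
    have "1 * u a \<le> c * u a" using ua c1 by (intro mult_right_mono) auto
    then show ?thesis using ua by linarith
  qed
  have uF: "\<forall>i\<in>F. 0 \<le> u i \<and> c * u i \<le> 1" using insert by auto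
  have uF1: "\<forall>i\<in>F. u i \<le> 1"
  proof
    fix i assume i: "i \<in> F"
    have "1 * u i \<le> c * u i" using uF i c1 by (intro mult_right_mono) auto
    then show "u i \<le> 1" using uF i by auto
  qed
  have s0: "0 \<le> s" unfolding s_def using uF by (auto intro!: sum_nonneg)
  have Pa: "(\<Prod>i\<in>insert a F. 1 - u i) = (1 - u a) * P" using insert unfolding P_def by simp
  have Ra: "(\<Prod>i\<in>insert a F. 1 - c * u i) = (1 - c * u a) * R" using insert unfolding R_def by simp
  have sa: "(\<Sum>i\<in>insert a F. u i) = u a + s" using insert unfolding s_def by simp
  have hyp': "c * (u a + s) + 1 / (N - 1) \<le> \<eta> * ((1 - u a) * P)" using insert.prems(2) Pa sa by simp
  have L1: "P - R \<le> (c - 1) * s \<and> (c - 1) * s * R \<le> P - R \<and> 0 \<le> R \<and> R \<le> P \<and> P \<le> 1"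
  proof -
    have h: "\<forall>i\<in>F. 0 \<le> 1 - c * u i \<and> 1 - c * u i \<le> 1 - u i \<and> 1 - u i \<le> 1"
      using uF c1 by (auto simp: mult_right_mono intro: order_trans[OF _ mult_right_mono[of 1 c]])
    have sm: "(\<Sum>i\<in>F. (1 - u i) - (1 - c * u i)) = (c - 1) * s"
      unfolding s_def by (simp add: algebra_simps sum_distrib_left sum_subtractf)
    show ?thesis using prod_diff_le[where x="\<lambda>i. 1 - u i" and y="\<lambda>i. 1 - c * u i", OF insert(1) h]
      unfolding sm P_def R_def by auto
  qed
  have L2: "1 - P \<le> s \<and> s * P \<le> 1 - P"
  proof -
    have h: "\<forall>i\<in>F. 0 \<le> 1 - u i \<and> 1 - u i \<le> 1 \<and> (1::real) \<le> 1"
      using uF uF1 by auto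
    show ?thesis using prod_diff_le[where x="\<lambda>i. 1" and y="\<lambda>i. 1 - u i", OF insert(1) h]
      unfolding P_def s_def by auto
  qed
  have L3: "1 - R \<le> c * s"
  proof -
    have h: "\<forall>i\<in>F. 0 \<le> 1 - c * u i \<and> 1 - c * u i \<le> 1 \<and> (1::real) \<le> 1"
      using uF c1 by (auto simp: mult_nonneg_nonneg)
    show ?thesis using prod_diff_le[where x="\<lambda>i. 1" and y="\<lambda>i. 1 - c * u i", OF insert(1) h]
      unfolding R_def s_def by (auto simp: sum_distrib_left)
  qed
  have hypF: "c * s + 1 / (N - 1) \<le> \<eta> * P"
  proof -
    have "c * s + 1 / (N - 1) \<le> c * (u a + s) + 1 / (N - 1)" using ua c1 by simp
    also have "\<dots> \<le> \<eta> * ((1 - u a) * P)" by (rule hyp')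
    also have "\<dots> \<le> \<eta> * P" using ua L1 \<eta> by (intro mult_left_mono) (auto simp: algebra_simps)
    finally show ?thesis .
  qed
  have IH: "\<bar>B - e\<bar> \<le> \<eta> * e \<and> 0 \<le> e"
    using insert.IH[OF uF] hypF unfolding B_def e_def P_def R_def s_def by auto
  define D where "D = N * (P - R) - (1 - P)"
  have Dup: "D \<le> s * (c * s + 1 / (N - 1))"
  proof -
    have "D \<le> N * ((c - 1) * s) - s * P" unfolding D_def using L1 L2 N by (intro diff_mono mult_left_mono) auto
    also have "\<dots> = s * (c - 1) + s * (1 - P)"
    proof -
      have "N * ((c - 1) * s) = c * s" using Nc(1) by (metis mult.assoc)
      then show ?thesis by (simp add: algebra_simps)
    qed
    also have "\<dots> \<le> s * (c - 1) + s * (c * s)" using L2 s0 c1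
      by (intro add_left_mono mult_left_mono) (auto intro: order_trans[OF _ mult_right_mono[of 1 c]])
    also have "\<dots> = s * (c * s + 1 / (N - 1))" unfolding Nc(3)[symmetric] by (simp add: algebra_simps)
    finally show ?thesis .
  qed
  have Dlo: "- (s * (c * s + 1 / (N - 1))) \<le> D"
  proof -
    have "N * ((c - 1) * s * R) - s \<le> D" unfolding D_def using L1 L2 N by (intro diff_mono mult_left_mono) auto
    moreover have "N * ((c - 1) * s * R) = c * s * R" using Nc(1) by (metis mult.assoc)
    moreover have "c * s * R \<ge> s * R"
    proof -
      have "1 * (s * R) \<le> c * (s * R)" using c1 s0 L1 by (intro mult_right_mono) auto
      then show ?thesis by (simp add: mult.assoc)
    qed
    moreover have "s * R - s = - (s * (1 - R))" by (simp add: algebra_simps)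
    moreover have "s * (1 - R) \<le> s * (c * s)" using L3 s0 by (intro mult_left_mono) auto
    moreover have "s * (c * s) \<le> s * (c * s + 1 / (N - 1))" using s0 N by (intro mult_left_mono) auto
    ultimately show ?thesis by linarith
  qed
  have Dabs: "\<bar>D\<bar> \<le> \<eta> * (1 - P)"
  proof -
    have "\<bar>D\<bar> \<le> s * (c * s + 1 / (N - 1))" using Dup Dlo by linarith
    also have "\<dots> \<le> s * (\<eta> * P)" using hypF s0 by (intro mult_left_mono) auto
    also have "\<dots> = \<eta> * (s * P)" by simp
    also have "\<dots> \<le> \<eta> * (1 - P)" using L2 \<eta> by (intro mult_left_mono) auto
    finally show ?thesis .
  qed
  have eB: "(N - 1) * ((1 - c * u a) * R) - N * ((1 - u a) * P) + 1 = B + u a * N * (P - R)"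
  proof -
    have "(N - 1) * ((1 - c * u a) * R) = (N - 1) * R - ((N - 1) * c) * (u a * R)" by (simp add: algebra_simps)
    then have t: "(N - 1) * ((1 - c * u a) * R) = (N - 1) * R - N * (u a * R)" unfolding Nc(2) .
    show ?thesis unfolding B_def t by (simp add: algebra_simps)
  qed
  have ee: "(1 - u a) * P - 1 + (u a + s) = e + u a * (1 - P)"
    unfolding e_def by (simp add: algebra_simps)
  have "\<bar>(B + u a * N * (P - R)) - (e + u a * (1 - P))\<bar> = \<bar>(B - e) + u a * D\<bar>"
    unfolding D_def by (simp add: algebra_simps)
  also have "\<dots> \<le> \<bar>B - e\<bar> + \<bar>u a * D\<bar>" by (rule abs_triangle_ineq)
  also have "\<bar>B - e\<bar> + \<bar>u a * D\<bar> = \<bar>B - e\<bar> + u a * \<bar>D\<bar>" using ua by (simp add: abs_mult)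
  also have "\<dots> \<le> \<eta> * e + u a * (\<eta> * (1 - P))" using IH Dabs ua by (intro add_mono mult_left_mono) auto
  also have "\<dots> = \<eta> * (e + u a * (1 - P))" by (simp add: algebra_simps)
  finally have fin: "\<bar>(B + u a * N * (P - R)) - (e + u a * (1 - P))\<bar> \<le> \<eta> * (e + u a * (1 - P))" .
  have "0 \<le> e + u a * (1 - P)" using IH ua L1 by auto
  then show ?case unfolding Pa Ra sa eB ee using fin by simp
qed


lemma case_i_bound:
  fixes p r :: "nat \<Rightarrow> real" and N :: real
  assumes A: "finite A" "1 \<in> A" "2 \<in> A" and N: "N \<ge> 2"
    and pr: "\<forall>i\<in>A. 0 \<le> r i \<and> r i \<le> p i \<and> p i \<le> 1 \<and> p i - r i \<le> 1 / (N - 1)"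
  shows "0 \<le> N * (\<Prod>i\<in>A. p i) - (N - 1) * (\<Prod>i\<in>A. r i)
    \<and> N * (\<Prod>i\<in>A. p i) - (N - 1) * (\<Prod>i\<in>A. r i) \<le> p 1 + 2 * (real (card A) + 1) * (p 1 + p 2)"
proof -
  define A' where "A' = A - {1, 2}"
  have fA': "finite A'" using A unfolding A'_def by simp
  define P' where "P' = (\<Prod>i\<in>A'. p i)"
  define R' where "R' = (\<Prod>i\<in>A'. r i)"
  have eP: "(\<Prod>i\<in>A. p i) = p 1 * p 2 * P'" and eR: "(\<Prod>i\<in>A. r i) = r 1 * r 2 * R'"
  proof -
    have "A = insert 1 (insert 2 A')" "1 \<notin> insert 2 A'" "2 \<notin> A'" using A unfolding A'_def by auto
    then show "(\<Prod>i\<in>A. p i) = p 1 * p 2 * P'" "(\<Prod>i\<in>A. r i) = r 1 * r 2 * R'"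
      unfolding P'_def R'_def using fA' by (metis finite_insert mult.assoc prod.insert)+
  qed
  have prA': "\<forall>i\<in>A'. 0 \<le> r i \<and> r i \<le> p i \<and> p i \<le> 1" using pr unfolding A'_def by auto
  have L: "P' - R' \<le> (\<Sum>i\<in>A'. p i - r i) \<and> 0 \<le> R' \<and> R' \<le> P' \<and> P' \<le> 1"
    using prod_diff_le[OF fA' prA'] unfolding P'_def R'_def by auto
  have sA': "(\<Sum>i\<in>A'. p i - r i) \<le> real (card A) * (1 / (N - 1))"
  proof -
    have "(\<Sum>i\<in>A'. p i - r i) \<le> (\<Sum>i\<in>A'. 1 / (N - 1))" using pr unfolding A'_def by (intro sum_mono) auto
    also have "\<dots> = real (card A') * (1 / (N - 1))" by simp
    also have "\<dots> \<le> real (card A) * (1 / (N - 1))" using A N unfolding A'_def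
      by (intro mult_right_mono) (auto intro: card_mono)
    finally show ?thesis .
  qed
  have p1: "0 \<le> r 1" "r 1 \<le> p 1" "p 1 \<le> 1" "p 1 - r 1 \<le> 1 / (N - 1)" using pr A by auto
  have p2: "0 \<le> r 2" "r 2 \<le> p 2" "p 2 \<le> 1" "p 2 - r 2 \<le> 1 / (N - 1)" using pr A by auto
  have RP: "r 1 * r 2 * R' \<le> p 1 * p 2 * P'" using p1 p2 L by (intro mult_mono) (auto intro: mult_nonneg_nonneg)
  have R0: "0 \<le> r 1 * r 2 * R'" using p1 p2 L by simp
  have Pp1: "p 1 * p 2 * P' \<le> p 1"
  proof -
    have "p 2 * P' \<le> 1" using p1 p2 L by (intro mult_le_one) auto
    then have "p 1 * (p 2 * P') \<le> p 1" using p1 by (intro mult_left_le) auto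
    then show ?thesis by (simp add: mult.assoc)
  qed
  have "p 1 * p 2 * P' - r 1 * r 2 * R' = p 1 * p 2 * (P' - R') + (p 1 * (p 2 - r 2) + r 2 * (p 1 - r 1)) * R'"
    by (simp add: algebra_simps)
  also have "\<dots> \<le> p 2 * (real (card A) * (1 / (N - 1))) + (p 1 * (1 / (N - 1)) + p 2 * (1 / (N - 1))) * 1"
    using p1 p2 L sA' N by (intro add_mono mult_mono) (auto simp: mult_le_one mult_left_le_one_le)
  finally have PR: "p 1 * p 2 * P' - r 1 * r 2 * R' \<le> (p 2 * real (card A) + p 1 + p 2) / (N - 1)"
    by (simp add: add_divide_distrib)
  have NN: "N / (N - 1) \<le> 2" using N by (simp add: divide_le_eq)
  have "N * (p 1 * p 2 * P' - r 1 * r 2 * R') \<le> N * ((p 2 * real (card A) + p 1 + p 2) / (N - 1))"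
    using PR N by (intro mult_left_mono) auto
  also have "\<dots> = (N / (N - 1)) * (p 2 * real (card A) + p 1 + p 2)" by simp
  also have "\<dots> \<le> 2 * (p 2 * real (card A) + p 1 + p 2)"
    using NN p1 p2 by (intro mult_right_mono) auto
  also have "\<dots> \<le> 2 * (real (card A) + 1) * (p 1 + p 2)"
    using p1 p2 by (simp add: algebra_simps)
  finally have NPR: "N * (p 1 * p 2 * P' - r 1 * r 2 * R') \<le> 2 * (real (card A) + 1) * (p 1 + p 2)" .
  have eq: "N * (p 1 * p 2 * P') - (N - 1) * (r 1 * r 2 * R') = r 1 * r 2 * R' + N * (p 1 * p 2 * P' - r 1 * r 2 * R')"
    by (simp add: algebra_simps)
  have "0 \<le> N * (p 1 * p 2 * P' - r 1 * r 2 * R')" using RP N by simp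
  then show ?thesis unfolding eP eR eq using NPR R0 RP Pp1 by linarith
qed


lemma case_ii_bound:
  fixes p r :: "nat \<Rightarrow> real" and N k :: real
  assumes A: "finite A" and N: "N > 1" and k: "k \<ge> 1"
    and pr: "\<forall>i\<in>A. 0 \<le> r i \<and> r i \<le> p i \<and> p i \<le> 1 \<and> p i - r i = (1 - p i) / (N - 1)"
  shows "\<bar>k * (\<Prod>i\<in>A. p i) + k * (k - 1) * (\<Prod>i\<in>A. p i) * (\<Prod>i\<in>A. r i) - k\<^sup>2 * (\<Prod>i\<in>A. p i)\<^sup>2
           - (k - k * (\<Prod>i\<in>A. p i))\<bar>
         \<le> (k - k * (\<Prod>i\<in>A. p i)) * ((1 - (\<Prod>i\<in>A. p i)) + k * real (card A) / (N - 1))"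
proof -
  define P where "P = (\<Prod>i\<in>A. p i)"
  define R where "R = (\<Prod>i\<in>A. r i)"
  have prA: "\<forall>i\<in>A. 0 \<le> r i \<and> r i \<le> p i \<and> p i \<le> 1" using pr by auto
  have L: "P - R \<le> (\<Sum>i\<in>A. p i - r i) \<and> 0 \<le> R \<and> R \<le> P \<and> P \<le> 1"
    using prod_diff_le[OF A prA] unfolding P_def R_def by auto
  have Ppi: "P \<le> p i" if "i \<in> A" for i
  proof -
    have "P = p i * (\<Prod>j\<in>A - {i}. p j)" unfolding P_def using A that by (simp add: prod.remove)
    also have "\<dots> \<le> p i * 1" using pr that A
      by (intro mult_left_mono prod_le_1) auto
    finally show ?thesis by simp
  qed
  have S: "(\<Sum>i\<in>A. p i - r i) \<le> real (card A) * ((1 - P) / (N - 1))"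
  proof -
    have "(\<Sum>i\<in>A. p i - r i) \<le> (\<Sum>i\<in>A. (1 - P) / (N - 1))"
      using pr Ppi N by (intro sum_mono) (auto intro!: divide_right_mono)
    then show ?thesis by simp
  qed
  have eq: "k * P + k * (k - 1) * P * R - k\<^sup>2 * P\<^sup>2 - (k - k * P) = k * (- (1 - P)\<^sup>2 - (k - 1) * P * (P - R))"
    by (simp add: algebra_simps power2_eq_square)
  have "\<bar>- (1 - P)\<^sup>2 - (k - 1) * P * (P - R)\<bar> \<le> (1 - P)\<^sup>2 + (k - 1) * P * (P - R)"
  proof -
    have nn: "0 \<le> (k - 1) * P * (P - R)" using L k by (intro mult_nonneg_nonneg) auto
    show ?thesis using nn zero_le_power2[of "1 - P"] by arith
  qed
  also have "\<dots> \<le> (1 - P)\<^sup>2 + k * 1 * (real (card A) * ((1 - P) / (N - 1)))"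
    using L k S by (intro add_left_mono mult_mono) auto
  also have "\<dots> = (1 - P) * ((1 - P) + k * real (card A) / (N - 1))" by (simp add: algebra_simps power2_eq_square)
  finally have b: "\<bar>- (1 - P)\<^sup>2 - (k - 1) * P * (P - R)\<bar> \<le> (1 - P) * ((1 - P) + k * real (card A) / (N - 1))" .
  have "\<bar>k * P + k * (k - 1) * P * R - k\<^sup>2 * P\<^sup>2 - (k - k * P)\<bar> = k * \<bar>- (1 - P)\<^sup>2 - (k - 1) * P * (P - R)\<bar>"
    unfolding eq using k by (simp add: abs_mult)
  also have "\<dots> \<le> k * ((1 - P) * ((1 - P) + k * real (card A) / (N - 1)))" using b k by simp
  finally show ?thesis unfolding P_def[symmetric] R_def[symmetric] by (simp add: algebra_simps)
qed

lemma equiv_from_bound: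
  fixes f g \<epsilon> :: "nat \<Rightarrow> real"
  assumes e: "\<epsilon> \<longlonglongrightarrow> 0" and b: "eventually (\<lambda>n. \<bar>g n - f n\<bar> \<le> \<epsilon> n * \<bar>f n\<bar>) sequentially"
  shows "f \<sim>[sequentially] g"
proof -
  let ?h = "\<lambda>n. if g n = 0 \<and> f n = 0 then 1 else g n / f n"
  have "eventually (\<lambda>n. norm (?h n - 1) \<le> \<bar>\<epsilon> n\<bar>) sequentially"
    using b
  proof eventually_elim
    case (elim n)
    show ?case
    proof (cases "f n = 0")
      case True
      then show ?thesis using elim by auto
    next
      case False
      then have "?h n - 1 = (g n - f n) / f n" by (auto simp: field_simps)
      then have "norm (?h n - 1) \<le> \<epsilon> n" using False elim by (simp add: abs_divide divide_le_eq)
      then show ?thesis by simp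
    qed
  qed
  moreover have "(\<lambda>n. \<bar>\<epsilon> n\<bar>) \<longlonglongrightarrow> 0" using e by (rule tendsto_rabs_zero)
  ultimately have "(\<lambda>n. ?h n - 1) \<longlonglongrightarrow> 0" by (rule Lim_null_comparison)
  then have "?h \<longlonglongrightarrow> 1" by (simp add: LIM_zero_iff)
  then have "g \<sim>[sequentially] f" by (rule asymp_equivI)
  then show ?thesis by (simp add: asymp_equiv_sym)
qed

lemma explicit:
  assumes m: "m \<ge> 1" and a: "\<forall>i\<in>{1..m}. 2 \<le> a i \<and> a i \<le> n"
  shows "E_cc n m a (\<lambda>S. real (X_all m S)) = real n * (\<Prod>i\<in>{1..m}. real (a i) / real n)"
    and "Var_X n m a = real n * (\<Prod>i\<in>{1..m}. real (a i) / real n)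
          + real n * (real n - 1) * (\<Prod>i\<in>{1..m}. real (a i) / real n) * (\<Prod>i\<in>{1..m}. (real (a i) - 1) / (real n - 1))
          - (real n * (\<Prod>i\<in>{1..m}. real (a i) / real n))\<^sup>2"
    and "E_cc n m a (\<lambda>S. c - real (X_all m S)) = c - real n * (\<Prod>i\<in>{1..m}. real (a i) / real n)"
    and "E_cc n m a (\<lambda>S. real (X_all m S) + c - d) = real n * (\<Prod>i\<in>{1..m}. real (a i) / real n) + c - d"
proof -
  let ?M = "coupon_pmf n m a"
  have a': "\<forall>i\<in>{1..m}. a i \<le> n" using a by auto
  note mom = coupon_moments[OF m a]
  show E: "E_cc n m a (\<lambda>S. real (X_all m S)) = real n * (\<Prod>i\<in>{1..m}. real (a i) / real n)"
    unfolding E_cc_def by (rule mom(1))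
  have q: "(\<Prod>i\<in>{1..m}. real (a i) * (real (a i) - 1) / (real n * (real n - 1))) =
      (\<Prod>i\<in>{1..m}. real (a i) / real n) * (\<Prod>i\<in>{1..m}. (real (a i) - 1) / (real n - 1))"
    by (simp add: prod.distrib[symmetric])
  show "Var_X n m a = real n * (\<Prod>i\<in>{1..m}. real (a i) / real n)
          + real n * (real n - 1) * (\<Prod>i\<in>{1..m}. real (a i) / real n) * (\<Prod>i\<in>{1..m}. (real (a i) - 1) / (real n - 1))
          - (real n * (\<Prod>i\<in>{1..m}. real (a i) / real n))\<^sup>2"
    unfolding Var_X_def
    apply (subst measure_pmf.variance_eq)
    apply (rule coupon_integrable[OF a'])+
    unfolding mom(1) mom(2) q by (simp add: algebra_simps)
  show "E_cc n m a (\<lambda>S. c - real (X_all m S)) = c - real n * (\<Prod>i\<in>{1..m}. real (a i) / real n)"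
    unfolding E_cc_def
    by (subst Bochner_Integration.integral_diff) (auto intro: coupon_integrable[OF a'] simp: mom(1))
  show "E_cc n m a (\<lambda>S. real (X_all m S) + c - d) = real n * (\<Prod>i\<in>{1..m}. real (a i) / real n) + c - d"
    unfolding E_cc_def
    by (subst Bochner_Integration.integral_diff Bochner_Integration.integral_add;
        auto intro: coupon_integrable[OF a'] simp: mom(1))+
qed

lemma chain_mono:
  fixes f :: "nat \<Rightarrow> nat"
  assumes "\<forall>i\<in>{1..<m}. f i \<le> f (Suc i)" "1 \<le> j" "j \<le> k" "k \<le> m"
  shows "f j \<le> f k"
  using assms(3,4)
proof (induction k rule: dec_induct)
  case base
  then show ?case by simp
next
  case (step k)
  then have "f k \<le> f (Suc k)" using assms(1,2) by auto
  with step show ?case by simp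
qed

lemma pr_facts:
  assumes "1 \<le> k" "k \<le> n" "2 \<le> n"
  shows "0 \<le> (real k - 1) / (real n - 1) \<and> (real k - 1) / (real n - 1) \<le> real k / real n \<and> real k / real n \<le> 1
    \<and> real k / real n - (real k - 1) / (real n - 1) = (1 - real k / real n) / (real n - 1)
    \<and> real k / real n - (real k - 1) / (real n - 1) \<le> 1 / (real n - 1) \<and> 0 < real k / real n"
proof -
  have n: "real n \<ge> 2" "real k \<ge> 1" "real k \<le> real n" using assms by auto
  have e: "real k / real n - (real k - 1) / (real n - 1) = (1 - real k / real n) / (real n - 1)"
    using n by (simp add: field_simps)
  have "(1 - real k / real n) / (real n - 1) \<le> 1 / (real n - 1)" using n by (intro divide_right_mono) auto
  moreover have "0 \<le> (1 - real k / real n) / (real n - 1)" using n by (intro divide_nonneg_nonneg) auto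
  moreover have "(real k - 1) / (real n - 1) \<le> real k / real n"
    using n by (simp add: divide_le_eq le_divide_eq algebra_simps)
  ultimately show ?thesis using e n by (auto simp: divide_le_eq)
qed

theorem lemma2:
  fixes m :: nat and a :: "nat \<Rightarrow> nat \<Rightarrow> nat"
  assumes m2: "m \<ge> 2"
    and A2a: "\<And>i. i \<in> {1..m} \<Longrightarrow> filterlim (\<lambda>n. a n i) at_top sequentially"
    and A2b: "\<And>i. i \<in> {1..m} \<Longrightarrow> filterlim (\<lambda>n. n - a n i) at_top sequentially"
    and A3: "eventually (\<lambda>n. 1 \<le> a n 1 \<and> (\<forall>i\<in>{1..<m}. a n i \<le> a n (Suc i)) \<and> a n m \<le> n - 1)
               sequentially"
    and A4: "\<And>i. i \<in> {1..m} \<Longrightarrow> \<exists>\<alpha>\<in>{0..1::real}. (\<lambda>n. real (a n i) / real n) \<longlonglongrightarrow> \<alpha>"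
  shows
    "((\<lambda>n. real (a n 1) / real n) \<longlonglongrightarrow> 0 \<and> (\<lambda>n. real (a n 2) / real n) \<longlonglongrightarrow> 0 \<longrightarrow>
        (\<lambda>n. E_cc n m (a n) (\<lambda>S. real (X_all m S))) \<sim>[sequentially] (\<lambda>n. Var_X n m (a n)))
   \<and> ((\<lambda>n. real (a n 1) / real n) \<longlonglongrightarrow> 0 \<and> (\<lambda>n. real (a n 2) / real n) \<longlonglongrightarrow> 1 \<longrightarrow>
        (\<lambda>n. E_cc n m (a n) (\<lambda>S. real (a n 1) - real (X_all m S)))
          \<sim>[sequentially] (\<lambda>n. Var_X n m (a n)))
   \<and> ((\<lambda>n. real (a n 1) / real n) \<longlonglongrightarrow> 1 \<and> (\<lambda>n. real (a n 2) / real n) \<longlonglongrightarrow> 1 \<longrightarrow>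
        (\<lambda>n. E_cc n m (a n)
               (\<lambda>S. real (X_all m S) + (real m - 1) * real n - (\<Sum>i=1..m. real (a n i))))
          \<sim>[sequentially] (\<lambda>n. Var_X n m (a n)))"
proof -
  define p where "p n i = real (a n i) / real n" for n i
  define r where "r n i = (real (a n i) - 1) / (real n - 1)" for n i
  define G where "G n \<longleftrightarrow> n \<ge> 3 \<and> (\<forall>i\<in>{1..m}. 2 \<le> a n i \<and> a n i \<le> n - 1 \<and> a n 1 \<le> a n i)
        \<and> (\<forall>i\<in>{2..m}. a n 2 \<le> a n i)" for n
  have m1: "m \<ge> 1" "1 \<in> {1..m}" "2 \<in> {1..m}" using m2 by auto
  have evG: "eventually G sequentially"
  proof -
    have "eventually (\<lambda>n. \<forall>i\<in>{1..m}. 2 \<le> a n i) sequentially"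
      using A2a by (intro eventually_ball_finite) (auto simp: filterlim_at_top)
    moreover have "eventually (\<lambda>n. n \<ge> 3) sequentially" by (rule eventually_ge_at_top)
    ultimately show ?thesis using A3
    proof eventually_elim
      case (elim n)
      have ch: "a n j \<le> a n k" if "1 \<le> j" "j \<le> k" "k \<le> m" for j k
        using chain_mono[of m "a n" j k] elim that by auto
      show ?case unfolding G_def using elim ch m2 by (auto intro: order_trans[OF ch])
    qed
  qed
  have basic: "0 \<le> r n i \<and> r n i \<le> p n i \<and> p n i \<le> 1 \<and> p n i - r n i = (1 - p n i) / (real n - 1)
      \<and> p n i - r n i \<le> 1 / (real n - 1) \<and> 0 < p n i" if "G n" "i \<in> {1..m}" for n i
  proof -
    have k0: "2 \<le> a n i" "a n i \<le> n - 1" "3 \<le> n" using that unfolding G_def by auto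
    have k: "1 \<le> a n i" "a n i \<le> n" "2 \<le> n" using k0 by auto
    show ?thesis using pr_facts[OF k] unfolding p_def r_def by blast
  qed
  have expl: "E_cc n m (a n) (\<lambda>S. real (X_all m S)) = real n * (\<Prod>i\<in>{1..m}. p n i)"
    "Var_X n m (a n) = real n * (\<Prod>i\<in>{1..m}. p n i)
          + real n * (real n - 1) * (\<Prod>i\<in>{1..m}. p n i) * (\<Prod>i\<in>{1..m}. r n i)
          - (real n * (\<Prod>i\<in>{1..m}. p n i))\<^sup>2"
    "E_cc n m (a n) (\<lambda>S. c - real (X_all m S)) = c - real n * (\<Prod>i\<in>{1..m}. p n i)"
    "E_cc n m (a n) (\<lambda>S. real (X_all m S) + c - d) = real n * (\<Prod>i\<in>{1..m}. p n i) + c - d"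
    if "G n" for n c d
  proof -
    have h: "\<forall>i\<in>{1..m}. 2 \<le> a n i \<and> a n i \<le> n" using that unfolding G_def by auto
    show "E_cc n m (a n) (\<lambda>S. real (X_all m S)) = real n * (\<Prod>i\<in>{1..m}. p n i)"
      "Var_X n m (a n) = real n * (\<Prod>i\<in>{1..m}. p n i)
          + real n * (real n - 1) * (\<Prod>i\<in>{1..m}. p n i) * (\<Prod>i\<in>{1..m}. r n i)
          - (real n * (\<Prod>i\<in>{1..m}. p n i))\<^sup>2"
      "E_cc n m (a n) (\<lambda>S. c - real (X_all m S)) = c - real n * (\<Prod>i\<in>{1..m}. p n i)"
      "E_cc n m (a n) (\<lambda>S. real (X_all m S) + c - d) = real n * (\<Prod>i\<in>{1..m}. p n i) + c - d"
      using explicit[OF m1(1) h] unfolding p_def r_def by simp_all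
  qed
  have part1: "(\<lambda>n. E_cc n m (a n) (\<lambda>S. real (X_all m S))) \<sim>[sequentially] (\<lambda>n. Var_X n m (a n))"
    if h1: "(\<lambda>n. p n 1) \<longlonglongrightarrow> 0" and h2: "(\<lambda>n. p n 2) \<longlonglongrightarrow> 0"
  proof (rule equiv_from_bound)
    show "(\<lambda>n. p n 1 + 2 * (real (card {1..m}) + 1) * (p n 1 + p n 2)) \<longlonglongrightarrow> 0"
      using h1 h2 by (auto intro!: tendsto_eq_intros)
    show "\<forall>\<^sub>F n in sequentially. \<bar>Var_X n m (a n) - E_cc n m (a n) (\<lambda>S. real (X_all m S))\<bar>
        \<le> (p n 1 + 2 * (real (card {1..m}) + 1) * (p n 1 + p n 2)) * \<bar>E_cc n m (a n) (\<lambda>S. real (X_all m S))\<bar>"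
      using evG
    proof eventually_elim
      case (elim n)
      define P where "P = (\<Prod>i\<in>{1..m}. p n i)"
      define R where "R = (\<Prod>i\<in>{1..m}. r n i)"
      define \<epsilon> where "\<epsilon> = p n 1 + 2 * (real (card {1..m}) + 1) * (p n 1 + p n 2)"
      have N: "real n \<ge> 2" using elim unfolding G_def by auto
      have b: "0 \<le> real n * P - (real n - 1) * R \<and> real n * P - (real n - 1) * R \<le> \<epsilon>"
      proof -
        have hyp: "\<forall>i\<in>{1..m}. 0 \<le> r n i \<and> r n i \<le> p n i \<and> p n i \<le> 1 \<and> p n i - r n i \<le> 1 / (real n - 1)"
          using basic[OF elim] by blast
        have fin: "finite {1..m}" by simp
        show ?thesis using case_i_bound[OF fin m1(2,3) N hyp] unfolding P_def R_def \<epsilon>_def .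
      qed
      have P0: "0 \<le> P" unfolding P_def using basic[OF elim] by (intro prod_nonneg) (meson atLeastAtMost_iff less_imp_le)
      have "\<bar>Var_X n m (a n) - E_cc n m (a n) (\<lambda>S. real (X_all m S))\<bar> = real n * P * (real n * P - (real n - 1) * R)"
      proof -
        have eq: "Var_X n m (a n) - E_cc n m (a n) (\<lambda>S. real (X_all m S)) = - (real n * P * (real n * P - (real n - 1) * R))"
          unfolding expl[OF elim] P_def[symmetric] R_def[symmetric] by (simp add: algebra_simps power2_eq_square)
        have "0 \<le> real n * P * (real n * P - (real n - 1) * R)" using b P0 by simp
        then show ?thesis unfolding eq by simp
      qed
      also have "\<dots> \<le> real n * P * \<epsilon>" using b P0 N by (intro mult_left_mono) auto
      also have "\<dots> = \<epsilon> * \<bar>E_cc n m (a n) (\<lambda>S. real (X_all m S))\<bar>"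
        unfolding expl[OF elim] P_def[symmetric] using P0 by simp
      finally show ?case unfolding \<epsilon>_def .
    qed
  qed
  have Nge: "real n \<ge> 3" "real n > 1" "real n / (real n - 1) \<le> 2" "1 / (real n - 1) \<le> 2 / real n" if "G n" for n
  proof -
    show "real n \<ge> 3" using that unfolding G_def by auto
    then show "real n > 1" "real n / (real n - 1) \<le> 2" "1 / (real n - 1) \<le> 2 / real n"
      by (auto simp: field_simps)
  qed
  have mono: "p n j \<le> p n i" if "G n" "a n j \<le> a n i" for n i j
    unfolding p_def using that Nge[OF that(1)] by (intro divide_right_mono) auto
  have prod_split: "(\<Prod>i\<in>{1..m}. f i) = f 1 * (\<Prod>i\<in>{2..m}. f i)" for f :: "nat \<Rightarrow> real"
  proof -
    have "{1..m} = insert 1 {2..m}" using m1 by auto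
    then show ?thesis by simp
  qed
  have part2: "(\<lambda>n. E_cc n m (a n) (\<lambda>S. real (a n 1) - real (X_all m S))) \<sim>[sequentially] (\<lambda>n. Var_X n m (a n))"
    if h1: "(\<lambda>n. p n 1) \<longlonglongrightarrow> 0" and h2: "(\<lambda>n. p n 2) \<longlonglongrightarrow> 1"
  proof (rule equiv_from_bound)
    have pi: "(\<lambda>n. p n i) \<longlonglongrightarrow> 1" if "i \<in> {2..m}" for i
    proof (rule tendsto_sandwich[OF _ _ h2 tendsto_const])
      show "\<forall>\<^sub>F n in sequentially. p n 2 \<le> p n i"
        using evG by eventually_elim (use that in \<open>auto intro!: mono simp: G_def\<close>)
      show "\<forall>\<^sub>F n in sequentially. p n i \<le> 1"
        using evG by eventually_elim (use that basic in auto)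
    qed
    have "(\<lambda>n. \<Prod>i\<in>{2..m}. p n i) \<longlonglongrightarrow> (\<Prod>i\<in>{2..m}. 1)"
      by (rule tendsto_prod) (rule pi)
    then have P2: "(\<lambda>n. \<Prod>i\<in>{2..m}. p n i) \<longlonglongrightarrow> 1" by simp
    show "(\<lambda>n. (1 - (\<Prod>i\<in>{2..m}. p n i)) + 2 * real (card {2..m}) * p n 1) \<longlonglongrightarrow> 0"
    proof -
      have "(\<lambda>n. (1 - (\<Prod>i\<in>{2..m}. p n i)) + 2 * real (card {2..m}) * p n 1) \<longlonglongrightarrow> (1 - 1) + 2 * real (card {2..m}) * 0"
        by (intro tendsto_add tendsto_diff tendsto_const P2 tendsto_mult h1)
      then show ?thesis by simp
    qed
    show "\<forall>\<^sub>F n in sequentially. \<bar>Var_X n m (a n) - E_cc n m (a n) (\<lambda>S. real (a n 1) - real (X_all m S))\<bar>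
        \<le> ((1 - (\<Prod>i\<in>{2..m}. p n i)) + 2 * real (card {2..m}) * p n 1) * \<bar>E_cc n m (a n) (\<lambda>S. real (a n 1) - real (X_all m S))\<bar>"
      using evG
    proof eventually_elim
      case (elim n)
      define P2 where "P2 = (\<Prod>i\<in>{2..m}. p n i)"
      define R2 where "R2 = (\<Prod>i\<in>{2..m}. r n i)"
      define k where "k = real (a n 1)"
      note N = Nge[OF elim]
      have "2 \<le> a n 1" using elim m1 unfolding G_def by blast
      then have k1: "k \<ge> 1" unfolding k_def by simp
      have hyp: "\<forall>i\<in>{2..m}. 0 \<le> r n i \<and> r n i \<le> p n i \<and> p n i \<le> 1 \<and> p n i - r n i = (1 - p n i) / (real n - 1)"
        using basic[OF elim] by auto
      have fin: "finite {2..m}" by simp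
      have b: "\<bar>k * P2 + k * (k - 1) * P2 * R2 - k\<^sup>2 * P2\<^sup>2 - (k - k * P2)\<bar>
         \<le> (k - k * P2) * ((1 - P2) + k * real (card {2..m}) / (real n - 1))"
        using case_ii_bound[OF fin N(2) k1 hyp] unfolding P2_def R2_def .
      have np1: "real n * p n 1 = k" "(real n - 1) * r n 1 = k - 1"
        unfolding p_def r_def k_def using N by auto
      have Veq: "Var_X n m (a n) = k * P2 + k * (k - 1) * P2 * R2 - k\<^sup>2 * P2\<^sup>2"
      proof -
        have "Var_X n m (a n) = (real n * p n 1) * P2 + (real n * p n 1) * ((real n - 1) * r n 1) * P2 * R2
            - ((real n * p n 1) * P2)\<^sup>2"
          unfolding expl[OF elim] prod_split[of "p n"] prod_split[of "r n"] P2_def R2_def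
          by (simp add: algebra_simps)
        then show ?thesis unfolding np1 by (simp add: power_mult_distrib)
      qed
      have Teq: "E_cc n m (a n) (\<lambda>S. real (a n 1) - real (X_all m S)) = k - k * P2"
      proof -
        have "E_cc n m (a n) (\<lambda>S. real (a n 1) - real (X_all m S)) = k - (real n * p n 1) * P2"
          unfolding expl[OF elim] prod_split[of "p n"] P2_def k_def by (simp add: algebra_simps)
        then show ?thesis unfolding np1 .
      qed
      have pb: "0 \<le> p n i \<and> p n i \<le> 1" if "i \<in> {2..m}" for i
      proof -
        have "i \<in> {1..m}" using that by auto
        from basic[OF elim this] show ?thesis by auto
      qed
      have P21: "P2 \<le> 1" "0 \<le> P2" unfolding P2_def using pb
        by (auto intro!: prod_le_1 prod_nonneg)
      have T0: "0 \<le> k - k * P2" using P21 k1 by (simp add: mult_left_le)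
      have "k * real (card {2..m}) / (real n - 1) = (real n / (real n - 1)) * real (card {2..m}) * p n 1"
        using N unfolding k_def p_def by (simp add: field_simps)
      also have "\<dots> \<le> 2 * real (card {2..m}) * p n 1"
        using N basic[OF elim m1(2)] by (intro mult_right_mono) auto
      finally have kb: "k * real (card {2..m}) / (real n - 1) \<le> 2 * real (card {2..m}) * p n 1" .
      have "\<bar>Var_X n m (a n) - E_cc n m (a n) (\<lambda>S. real (a n 1) - real (X_all m S))\<bar>
           \<le> (k - k * P2) * ((1 - P2) + k * real (card {2..m}) / (real n - 1))"
        unfolding Veq Teq by (rule b)
      also have "\<dots> \<le> (k - k * P2) * ((1 - P2) + 2 * real (card {2..m}) * p n 1)"
        using T0 kb by (intro mult_left_mono) auto
      finally show ?case unfolding Teq P2_def[symmetric] using T0 by (simp add: mult.commute)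
    qed
  qed
  have part3: "(\<lambda>n. E_cc n m (a n) (\<lambda>S. real (X_all m S) + (real m - 1) * real n - (\<Sum>i=1..m. real (a n i))))
          \<sim>[sequentially] (\<lambda>n. Var_X n m (a n))"
    if h1: "(\<lambda>n. p n 1) \<longlonglongrightarrow> 1"
  proof (rule equiv_from_bound)
    have pi: "(\<lambda>n. p n i) \<longlonglongrightarrow> 1" if "i \<in> {1..m}" for i
    proof (rule tendsto_sandwich[OF _ _ h1 tendsto_const])
      show "\<forall>\<^sub>F n in sequentially. p n 1 \<le> p n i"
        using evG by eventually_elim (use that in \<open>auto intro!: mono simp: G_def\<close>)
      show "\<forall>\<^sub>F n in sequentially. p n i \<le> 1"
        using evG by eventually_elim (use that basic in auto)
    qed
    have "(\<lambda>n. \<Prod>i\<in>{1..m}. p n i) \<longlonglongrightarrow> (\<Prod>i\<in>{1..m}. 1)"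
      by (rule tendsto_prod) (rule pi)
    then have P: "(\<lambda>n. \<Prod>i\<in>{1..m}. p n i) \<longlonglongrightarrow> 1" by simp
    have "(\<lambda>n. \<Sum>i\<in>{1..m}. 1 - p n i) \<longlonglongrightarrow> (\<Sum>i\<in>{1..m}. 1 - 1)"
      by (intro tendsto_sum tendsto_diff tendsto_const pi)
    then have S: "(\<lambda>n. \<Sum>i\<in>{1..m}. 1 - p n i) \<longlonglongrightarrow> 0" by simp
    have inv: "(\<lambda>n. 2 / real n) \<longlonglongrightarrow> 0"
      by (intro tendsto_divide_0[OF tendsto_const] filterlim_at_top_imp_at_infinity filterlim_real_sequentially)
    have "(\<lambda>n. 2 * (\<Sum>i\<in>{1..m}. 1 - p n i) + 2 / real n + (1 - (\<Prod>i\<in>{1..m}. p n i))) \<longlonglongrightarrow> 2 * 0 + 0 + (1 - 1)"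
      by (intro tendsto_add tendsto_mult tendsto_diff tendsto_const S inv P)
    then show "(\<lambda>n. 2 * (\<Sum>i\<in>{1..m}. 1 - p n i) + 2 / real n + (1 - (\<Prod>i\<in>{1..m}. p n i))) \<longlonglongrightarrow> 0" by simp
    show "\<forall>\<^sub>F n in sequentially. \<bar>Var_X n m (a n) - E_cc n m (a n) (\<lambda>S. real (X_all m S) + (real m - 1) * real n - (\<Sum>i=1..m. real (a n i)))\<bar>
        \<le> (2 * (\<Sum>i\<in>{1..m}. 1 - p n i) + 2 / real n + (1 - (\<Prod>i\<in>{1..m}. p n i))) *
          \<bar>E_cc n m (a n) (\<lambda>S. real (X_all m S) + (real m - 1) * real n - (\<Sum>i=1..m. real (a n i)))\<bar>"
      using evG
    proof eventually_elim
      case (elim n)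
      note N = Nge[OF elim]
      define N' where "N' = real n"
      define c where "c = N' / (N' - 1)"
      define u where "u i = 1 - p n i" for i
      define P where "P = (\<Prod>i\<in>{1..m}. 1 - u i)"
      define R where "R = (\<Prod>i\<in>{1..m}. 1 - c * u i)"
      define S where "S = (\<Sum>i\<in>{1..m}. u i)"
      define e where "e = P - 1 + S"
      define B where "B = (N' - 1) * R - N' * P + 1"
      have N1: "N' > 1" "N' \<ge> 3" unfolding N'_def using N by auto
      have Pp: "P = (\<Prod>i\<in>{1..m}. p n i)" unfolding P_def u_def by simp
      have rcu: "r n i = 1 - c * u i" for i
        unfolding r_def u_def c_def p_def N'_def using N1 unfolding N'_def by (simp add: field_simps)
      have Rr: "R = (\<Prod>i\<in>{1..m}. r n i)" unfolding R_def rcu ..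
      have pos: "0 < p n i" "p n i \<le> 1" "0 \<le> r n i" if "i \<in> {1..m}" for i using basic[OF elim that] by auto
      have P0: "P > 0" unfolding Pp using pos by (intro prod_pos) auto
      have P1: "P \<le> 1" unfolding Pp using pos by (intro prod_le_1) (auto intro: less_imp_le)
      have S0: "S \<ge> 0" unfolding S_def u_def using pos by (intro sum_nonneg) auto
      define \<eta> where "\<eta> = (c * S + 1 / (N' - 1)) / P"
      have c1: "c \<ge> 1" "c \<le> 2" unfolding c_def using N1 by (auto simp: field_simps)
      have \<eta>0: "\<eta> \<ge> 0" unfolding \<eta>_def using P0 S0 c1 N1 by auto
      have uh: "\<forall>i\<in>{1..m}. 0 \<le> u i \<and> c * u i \<le> 1"
        using pos rcu unfolding u_def by (metis diff_ge_0_iff_ge le_diff_eq add_0)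
      have hh: "c * (\<Sum>i\<in>{1..m}. u i) + 1 / (N' - 1) \<le> \<eta> * (\<Prod>i\<in>{1..m}. 1 - u i)"
        unfolding \<eta>_def S_def[symmetric] P_def[symmetric] using P0 by simp
      have K: "\<bar>B - e\<bar> \<le> \<eta> * e \<and> 0 \<le> e"
        using key_iii[OF _ N1(1) c_def \<eta>0 uh hh] unfolding B_def e_def P_def R_def S_def by simp
      have Veq: "Var_X n m (a n) = N' * P * B"
        unfolding expl[OF elim] Pp[symmetric] Rr[symmetric] B_def N'_def
        by (simp add: algebra_simps power2_eq_square)
      have sa: "(\<Sum>i=1..m. real (a n i)) = N' * (real m - S)"
      proof -
        have "(\<Sum>i=1..m. real (a n i)) = (\<Sum>i=1..m. N' * (1 - u i))"
          unfolding u_def p_def N'_def using N1 unfolding N'_def by (intro sum.cong) auto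
        also have "\<dots> = N' * (real m - S)" unfolding S_def by (simp add: sum_distrib_left[symmetric] sum_subtractf)
        finally show ?thesis .
      qed
      have Teq: "E_cc n m (a n) (\<lambda>S. real (X_all m S) + (real m - 1) * real n - (\<Sum>i=1..m. real (a n i))) = N' * e"
        unfolding expl[OF elim] Pp[symmetric] sa e_def N'_def[symmetric] by (simp add: algebra_simps)
      have T0: "0 \<le> N' * e" using K N1 by simp
      have "\<bar>Var_X n m (a n) - N' * e\<bar> = N' * \<bar>P * (B - e) - (1 - P) * e\<bar>"
      proof -
        have "N' * P * B - N' * e = N' * (P * (B - e) - (1 - P) * e)" by (simp add: algebra_simps)
        then show ?thesis unfolding Veq using N1 by (simp add: abs_mult)
      qed
      also have "\<dots> \<le> N' * (P * (\<eta> * e) + (1 - P) * e)"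
      proof -
        have "\<bar>P * (B - e) - (1 - P) * e\<bar> \<le> \<bar>P * (B - e)\<bar> + \<bar>(1 - P) * e\<bar>" by (rule abs_triangle_ineq4)
        also have "\<bar>P * (B - e)\<bar> \<le> P * (\<eta> * e)" using P0 K by (simp add: abs_mult mult_left_mono)
        also have "\<bar>(1 - P) * e\<bar> = (1 - P) * e" using P1 K by (simp add: abs_mult)
        finally show ?thesis using N1 by (intro mult_left_mono) auto
      qed
      also have "\<dots> = (c * S + 1 / (N' - 1) + (1 - P)) * (N' * e)"
      proof -
        have Pe: "P * \<eta> = c * S + 1 / (N' - 1)" unfolding \<eta>_def using P0 by simp
        have "N' * (P * (\<eta> * e) + (1 - P) * e) = (P * \<eta> + (1 - P)) * (N' * e)" by (simp add: algebra_simps)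
        then show ?thesis unfolding Pe .
      qed
      also have "\<dots> \<le> (2 * S + 2 / N' + (1 - P)) * (N' * e)"
      proof -
        have "c * S \<le> 2 * S" using c1 S0 by (intro mult_right_mono) auto
        moreover have "1 / (N' - 1) \<le> 2 / N'" using N unfolding N'_def by simp
        ultimately have "c * S + 1 / (N' - 1) + (1 - P) \<le> 2 * S + 2 / N' + (1 - P)" by simp
        then show ?thesis using T0 by (rule mult_right_mono)
      qed
      finally show ?case unfolding Teq using T0 unfolding S_def u_def Pp N'_def by simp
    qed
  qed
  have pe: "(\<lambda>n. real (a n j) / real n) = (\<lambda>n. p n j)" for j unfolding p_def ..
  show ?thesis unfolding pe using part1 part2 part3 by blast
qed

end
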